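(* Let $(M,\mathrm{d})$ be a metric space, $\mathcal X$ a set, $\tau>0$, $\mathcal S\subseteq M^{\mathcal X}$ and $f\in M^{\mathcal X}\setminus\mathcal S$. Let $\mathcal A$ be a deterministic algorithm that solves $\mathtt{Dec}(\mathcal S,f)$ from $q$ many $\tau$-accurate evaluation queries. Then for any probability measure $\mu$ over $\mathcal S$, $$q\ge\left(\max_{x\in\mathcal X}\Pr_{s\sim\mu}[\mathrm{d}(s(x),f(x))>\tau]\right)^{-1}.$$
   Context: For $s\in M^{\mathcal X}$, the evaluation oracle $\mathrm{Eval}_\tau(s)$, queried with $x\in\mathcal X$, returns some $v\in M$ with $\mathrm{d}(v,s(x))\le\tau$ (any such value may be returned); this is a $\tau$-accurate evaluation query. The decision problem $\mathtt{Dec}(\mathcal S,f)$: given evaluation-oracle access to an unknown $s\in\mathcal S\cup\{f\}$, decide whether $s\in\mathcal S$ or $s=f$. Solving it means being correct for every such $s$ and every valid oracle behaviour. *)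

theory Defs
  imports "HOL-Probability.Probability"
begin

text \<open>A deterministic adaptive algorithm making q evaluation queries is modelled as a
decision tree: qry gives the next query point as a function of the answers received so
far, and out gives the final decision (True = "s is in S", False = "s = f") as a function
of the complete list of q answers.\<close>

definition valid_answers ::
  "('m list \<Rightarrow> 'x) \<Rightarrow> real \<Rightarrow> ('x \<Rightarrow> 'm::metric_space) \<Rightarrow> 'm list \<Rightarrow> bool" where
  "valid_answers qry \<tau> s as \<longleftrightarrow>
     (\<forall>i < length as. dist (as ! i) (s (qry (take i as))) \<le> \<tau>)"

definition solves_Dec ::
  "('m list \<Rightarrow> 'x) \<Rightarrow> ('m list \<Rightarrow> bool) \<Rightarrow> nat \<Rightarrow> real \<Rightarrow>
   ('x \<Rightarrow> 'm::metric_space) set \<Rightarrow> ('x \<Rightarrow> 'm) \<Rightarrow> bool" where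
  "solves_Dec qry out q \<tau> S f \<longleftrightarrow>
     (\<forall>s \<in> S \<union> {f}. \<forall>as. length as = q \<and> valid_answers qry \<tau> s as \<longrightarrow> out as = (s \<in> S))"

end

theory Submission
  imports Defs
begin

fun gen :: "('x \<Rightarrow> 'm) \<Rightarrow> ('m list \<Rightarrow> 'x) \<Rightarrow> nat \<Rightarrow> 'm list" where
  "gen f qry 0 = []"
| "gen f qry (Suc n) = gen f qry n @ [f (qry (gen f qry n))]"

lemma gen_len[simp]: "length (gen f qry n) = n"
  by (induction n) auto

lemma gen_take: "i \<le> n \<Longrightarrow> take i (gen f qry n) = gen f qry i"
proof (induction n)
  case 0 then show ?case by simp
next
  case (Suc n)
  show ?case
  proof (cases "i = Suc n")
    case True then show ?thesis by simp
  next
    case False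
    then have "i \<le> n" using Suc.prems by simp
    then show ?thesis using Suc.IH by simp
  qed
qed

lemma gen_nth: "i < n \<Longrightarrow> gen f qry n ! i = f (qry (gen f qry i))"
proof (induction n)
  case 0 then show ?case by simp
next
  case (Suc n)
  then show ?case by (cases "i = n") (auto simp: nth_append)
qed

theorem mainTheorem3:
  fixes S :: "('x \<Rightarrow> 'm::metric_space) set" and f :: "'x \<Rightarrow> 'm"
    and \<tau> :: real and q :: nat
    and qry :: "'m list \<Rightarrow> 'x" and out :: "'m list \<Rightarrow> bool"
    and \<mu> :: "('x \<Rightarrow> 'm) measure"
  assumes "\<tau> > 0"
    and "f \<notin> S"
    and "solves_Dec qry out q \<tau> S f"
    and "prob_space \<mu>" and "space \<mu> = S"
    and "\<And>x. {s \<in> space \<mu>. dist (s x) (f x) > \<tau>} \<in> sets \<mu>"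
  shows "1 \<le> real q * (SUP x. measure \<mu> {s \<in> space \<mu>. dist (s x) (f x) > \<tau>})"
proof -
  interpret P: prob_space \<mu> by fact
  define B where "B x = {s \<in> space \<mu>. dist (s x) (f x) > \<tau>}" for x
  define as where "as = gen f qry q"
  define xs where "xs i = qry (gen f qry i)" for i
  have vf: "valid_answers qry \<tau> f as"
    unfolding valid_answers_def as_def using gen_nth gen_take assms(1)
    by (simp add: gen_take gen_nth less_imp_le dist_commute)
  have outf: "out as = False"
    using assms(2,3) vf unfolding solves_Dec_def as_def by auto
  have cover: "space \<mu> \<subseteq> (\<Union>i\<in>{..<q}. B (xs i))"
  proof
    fix s assume s: "s \<in> space \<mu>"
    show "s \<in> (\<Union>i\<in>{..<q}. B (xs i))"
    proof (rule ccontr)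
      assume "s \<notin> (\<Union>i\<in>{..<q}. B (xs i))"
      then have "\<forall>i<q. dist (s (xs i)) (f (xs i)) \<le> \<tau>"
        using s unfolding B_def by (auto simp: not_less)
      then have "valid_answers qry \<tau> s as"
        unfolding valid_answers_def as_def xs_def
        by (simp add: gen_take gen_nth less_imp_le dist_commute)
      then have "out as = True"
        using assms(3,5) s unfolding solves_Dec_def as_def by auto
      then show False using outf by simp
    qed
  qed
  have "1 = measure \<mu> (space \<mu>)" using P.prob_space by simp
  also have "\<dots> \<le> measure \<mu> (\<Union>i\<in>{..<q}. B (xs i))"
    using cover assms(6) unfolding B_def
    by (intro P.finite_measure_mono) auto
  also have "\<dots> \<le> (\<Sum>i<q. measure \<mu> (B (xs i)))"
    using assms(6) unfolding B_def
    by (intro P.finite_measure_subadditive_finite) auto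
  also have "\<dots> \<le> (\<Sum>i<q. (SUP x. measure \<mu> (B x)))"
  proof (rule sum_mono)
    fix i
    have "bdd_above (range (\<lambda>x. measure \<mu> (B x)))"
      by (rule bdd_aboveI[where M=1]) auto
    then show "measure \<mu> (B (xs i)) \<le> (SUP x. measure \<mu> (B x))"
      by (rule cSUP_upper[OF UNIV_I])
  qed
  also have "\<dots> = real q * (SUP x. measure \<mu> (B x))" by simp
  finally show ?thesis unfolding B_def .
qed

end
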